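(* Let $m>n$ be coprime positive integers, $\alpha=\epsilon_i-\delta_j$, $\lambda\in X_\alpha$, $\lambda^+=t_\alpha(\lambda)$, $\Lambda=x(\lambda)$ and $\Lambda^+=\tau_\alpha(\Lambda)$. If $(\Lambda^+,\beta)=0$ for $\beta=\epsilon_k-\delta_j$ with $k\in[n]$, then one of the following holds: (a) $k=i-1$, $\lambda_{n+1-i}=\lambda_{n+2-i}$ and $\beta=\epsilon_{i-1}-\delta_j$; (b) $\alpha=\epsilon_1-\delta_1$, $\beta=\epsilon_n-\delta_1$, $\lambda_1=m$, $\lambda_n=0$, and $(m,1^{n-1})\subseteq\lambda^+$ (i.e. $\lambda^+_1=m$ and $\lambda^+_n\ge1$).
   Context: $X$ is the set of partitions $\lambda=(\lambda_1\ge\dots\ge\lambda_n\ge0)$ with $\lambda_1\le m$, drawn in an $n\times m$ rectangle with rows $\epsilon_1,\dots,\epsilon_n$ top to bottom and columns $\delta_1,\dots,\delta_m$; the diagram consists of boxes $\epsilon_i-\delta_j$ with $j\le\lambda_{n+1-i}$; $\lambda'_j=\#\{i:\lambda_i\ge j\}$. $X_\alpha$: diagrams for which box $\alpha$ is an outer corner; $t_\alpha$ adds that box. $x(\lambda)=(a_1,\dots,a_n|b_1,\dots,b_m)$ with $a_i=m(n-i)+n\lambda_{n+1-i}$, $b_j=n(j-1)+m\lambda'_j$; $\tau_\alpha$ adds $n$ to $a_i$ and $m$ to $b_j$. For $\Lambda=(a|b)$ and $\gamma=\epsilon_p-\delta_q$, $(\Lambda,\gamma)=a_p-b_q$. *)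

theory Defs
  imports Main
begin

definition partitions :: "nat \<Rightarrow> nat \<Rightarrow> (nat \<Rightarrow> nat) set" where
  "partitions n m = {lam.
      (\<forall>a b. 1 \<le> a \<longrightarrow> a \<le> b \<longrightarrow> b \<le> n \<longrightarrow> lam b \<le> lam a)
    \<and> (\<forall>a. 1 \<le> a \<and> a \<le> n \<longrightarrow> lam a \<le> m)
    \<and> (\<forall>a. a < 1 \<or> n < a \<longrightarrow> lam a = 0)}"

text \<open>Young diagram in the n x m rectangle: box (i,j) stands for epsilon_i - delta_j,
  rows i = 1..n top to bottom; row i has length lam (n+1-i).\<close>
definition diagram :: "nat \<Rightarrow> (nat \<Rightarrow> nat) \<Rightarrow> (nat \<times> nat) set" where
  "diagram n lam = {(i, j). 1 \<le> i \<and> i \<le> n \<and> 1 \<le> j \<and> j \<le> lam (n + 1 - i)}"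

definition outer_corner :: "nat \<Rightarrow> nat \<Rightarrow> (nat \<Rightarrow> nat) \<Rightarrow> nat \<Rightarrow> nat \<Rightarrow> bool" where
  "outer_corner n m lam i j \<longleftrightarrow>
     1 \<le> i \<and> i \<le> n \<and> 1 \<le> j \<and> j \<le> m \<and> (i, j) \<notin> diagram n lam \<and>
     (\<exists>mu \<in> partitions n m. diagram n mu = insert (i, j) (diagram n lam))"

definition X_alpha :: "nat \<Rightarrow> nat \<Rightarrow> nat \<Rightarrow> nat \<Rightarrow> (nat \<Rightarrow> nat) set" where
  "X_alpha n m i j = {lam \<in> partitions n m. outer_corner n m lam i j}"

definition t_alpha :: "nat \<Rightarrow> nat \<Rightarrow> nat \<Rightarrow> (nat \<Rightarrow> nat) \<Rightarrow> (nat \<Rightarrow> nat)" where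
  "t_alpha n i j lam = lam((n + 1 - i) := lam (n + 1 - i) + 1)"

definition conj :: "nat \<Rightarrow> (nat \<Rightarrow> nat) \<Rightarrow> nat \<Rightarrow> nat" where
  "conj n lam j = card {l \<in> {1..n}. j \<le> lam l}"

text \<open>Weights Lambda = (a_1..a_n | b_1..b_m), represented as a pair of functions.\<close>
type_synonym weight = "(nat \<Rightarrow> int) \<times> (nat \<Rightarrow> int)"

definition x_wt :: "nat \<Rightarrow> nat \<Rightarrow> (nat \<Rightarrow> nat) \<Rightarrow> weight" where
  "x_wt n m lam =
     ((\<lambda>i. int m * (int n - int i) + int n * int (lam (n + 1 - i))),
      (\<lambda>j. int n * (int j - 1) + int m * int (conj n lam j)))"

definition tau_alpha :: "nat \<Rightarrow> nat \<Rightarrow> nat \<Rightarrow> nat \<Rightarrow> weight \<Rightarrow> weight" where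
  "tau_alpha n m i j W =
     ((fst W)(i := fst W i + int n), (snd W)(j := snd W j + int m))"

text \<open>(Lambda, epsilon_p - delta_q) = a_p - b_q.\<close>
definition pairing :: "weight \<Rightarrow> nat \<Rightarrow> nat \<Rightarrow> int" where
  "pairing W p q = fst W p - snd W q"

end

theory Submission
  imports Defs
begin

theorem lemma4p8:
  fixes n m i j k :: nat and lam :: "nat \<Rightarrow> nat"
  assumes "0 < n" "n < m" "coprime m n"
    and "1 \<le> i" "i \<le> n" "1 \<le> j" "j \<le> m"
    and "lam \<in> X_alpha n m i j"
    and "1 \<le> k" "k \<le> n"
    and "pairing (tau_alpha n m i j (x_wt n m lam)) k j = 0"
  shows "(k = i - 1 \<and> lam (n + 1 - i) = lam (n + 2 - i))
       \<or> (i = 1 \<and> j = 1 \<and> k = n \<and> lam 1 = m \<and> lam n = 0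
          \<and> t_alpha n i j lam 1 = m \<and> 1 \<le> t_alpha n i j lam n)"
proof -
  define r where "r = n + 1 - i"
  have r1: "1 \<le> r" "r \<le> n" using assms(4,5) r_def by auto
  have lp: "lam \<in> partitions n m" and oc: "outer_corner n m lam i j"
    using assms(8) by (auto simp: X_alpha_def)
  have mono: "\<And>a b. 1 \<le> a \<Longrightarrow> a \<le> b \<Longrightarrow> b \<le> n \<Longrightarrow> lam b \<le> lam a"
    using lp by (auto simp: partitions_def)
  have notin: "(i, j) \<notin> diagram n lam" using oc by (simp add: outer_corner_def)
  hence jgt: "lam r < j" using assms(4,5,6) r_def by (auto simp: diagram_def)
  obtain mu where mup: "mu \<in> partitions n m"
    and mud: "diagram n mu = insert (i, j) (diagram n lam)"
    using oc by (auto simp: outer_corner_def)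
  have mumono: "\<And>a b. 1 \<le> a \<Longrightarrow> a \<le> b \<Longrightarrow> b \<le> n \<Longrightarrow> mu b \<le> mu a"
    using mup by (auto simp: partitions_def)
  have "(i, j) \<in> diagram n mu" using mud by simp
  hence jmu: "j \<le> mu r" by (simp add: diagram_def r_def)
  have above: "j \<le> lam l" if "1 \<le> l" "l < r" for l
  proof -
    have "mu r \<le> mu l" using mumono[of l r] that r1 by simp
    hence "(n + 1 - l, j) \<in> diagram n mu" using jmu that r1 assms(6)
      by (auto simp: diagram_def)
    moreover have "n + 1 - l \<noteq> i" using that r_def r1 by auto
    ultimately have "(n + 1 - l, j) \<in> diagram n lam" using mud by auto
    thus ?thesis using that r1 by (auto simp: diagram_def)
  qed
  have below: "lam l < j" if "r \<le> l" "l \<le> n" for l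
    using mono[of r l] that r1 jgt by simp
  have "{l \<in> {1..n}. j \<le> lam l} = {1..<r}"
  proof (rule set_eqI, rule iffI)
    fix l assume "l \<in> {l \<in> {1..n}. j \<le> lam l}"
    thus "l \<in> {1..<r}" using below[of l] by (cases "r \<le> l") auto
  next
    fix l assume "l \<in> {1..<r}"
    thus "l \<in> {l \<in> {1..n}. j \<le> lam l}" using above[of l] r1 by auto
  qed
  hence cj: "conj n lam j = r - 1" by (simp add: conj_def)
  have eq: "int m * (int n - int k) + int n * int (lam (n + 1 - k)) + (if k = i then int n else 0)
        = int n * (int j - 1) + int m * int (r - 1) + int m"
    using assms(11) cj by (simp add: pairing_def tau_alpha_def x_wt_def split: if_splits)
  have jr: "j = lam r + 1"
  proof -
    have "(i, lam r + 1) \<in> diagram n mu" using jgt jmu assms r_def by (auto simp: diagram_def)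
    hence "(i, lam r + 1) \<in> insert (i, j) (diagram n lam)" using mud by simp
    moreover have "(i, lam r + 1) \<notin> diagram n lam" by (simp add: diagram_def r_def)
    ultimately have "lam r + 1 = j" by auto
    thus ?thesis by simp
  qed
  have key: "int m * (int i - 1 - int k) = int n * (int (lam r) - int (lam (n + 1 - k)) - (if k = i then 1 else 0))"
    using eq jr r1 r_def assms(4,5) by (auto simp: algebra_simps of_nat_diff split: if_splits)
  have cop: "coprime (int n) (int m)" using assms(3) by (simp add: coprime_commute)
  have "int n dvd int m * (int i - 1 - int k)" using key by simp
  hence "int n dvd (int i - 1 - int k)" using cop by (simp add: coprime_dvd_mult_right_iff)
  then obtain c where c: "int i - 1 - int k = int n * c" by (auto simp: dvd_def)
  have "c = 0 \<or> c = -1"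
  proof (rule ccontr)
    assume "\<not> (c = 0 \<or> c = -1)"
    hence "c \<ge> 1 \<or> c \<le> -2" by auto
    thus False
    proof
      assume "c \<ge> 1" hence "int n * c \<ge> int n" using assms(1) by simp
      thus False using c assms by linarith
    next
      assume "c \<le> -2" hence "int n * c \<le> - 2 * int n" using assms(1)
        by (metis mult.commute mult_right_mono of_nat_0_le_iff)
      thus False using c assms by linarith
    qed
  qed
  thus ?thesis
  proof
    assume "c = 0"
    hence k: "k = i - 1" using c by simp
    hence "k \<noteq> i" using assms(9) by simp
    hence "lam r = lam (n + 1 - k)" using key c \<open>c = 0\<close> assms(1) by simp
    hence "lam (n + 1 - i) = lam (n + 2 - i)" using k r_def assms(9) by (simp add: Suc_diff_le)
    thus ?thesis using k by simp
  next
    assume "c = -1"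
    hence ik: "i = 1" "k = n" using c assms by auto
    hence rn: "r = n" using r_def by simp
    show ?thesis
    proof (cases "n = 1")
      case True
      thus ?thesis using key ik rn assms(2) by simp
    next
      case False
      have "int m * (- int n) = int n * (int (lam n) - int (lam 1))"
        using key ik rn False by simp
      hence "int n * (int (lam 1) - int (lam n)) = int n * int m"
        by (simp add: algebra_simps)
      hence "int (lam 1) - int (lam n) = int m" using assms(1) by simp
      moreover have "lam 1 \<le> m" using lp assms(1) by (auto simp: partitions_def)
      ultimately have l1: "lam 1 = m" "lam n = 0" by auto
      have "j = 1" using jr rn l1 by simp
      thus ?thesis using ik l1 False by (simp add: t_alpha_def)
    qed
  qed
qed

end
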